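(* For every number of items $m\ge 3$, the class GS of valuations with the gross substitutes property on a set $X$ of $m$ items, viewed as a subset of $\mathbb{R}^{2^m-1}$ (via the coordinates $v(S)$, $\emptyset\ne S\subseteq X$), has Lebesgue measure zero; in particular its interior is empty.
   Context: A valuation on a finite set $X$ is a function $v:2^X\to\mathbb{R}_{\ge 0}$ with $v(\emptyset)=0$ and $v(A)\le v(B)$ whenever $A\subseteq B$. For a price vector $\vec p=(p_x)_{x\in X}$ of reals, $v(S\mid\vec p)=v(S)-\sum_{x\in S}p_x$, and the demand set $D(v\mid\vec p)$ is the family of sets $S\subseteq X$ maximizing $v(S\mid\vec p)$. A valuation $v$ has the gross substitutes property if for every item $i$, every price vector $\vec p$ and every price vector $\vec q\ge\vec p$ (coordinatewise) with $q_i=p_i$, whenever $i\in A$ for some $A\in D(v\mid\vec p)$ there exists $A'\in D(v\mid\vec q)$ with $i\in A'$. *)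

theory Defs
  imports "HOL-Analysis.Analysis"
begin

definition valuation :: "'a set \<Rightarrow> ('a set \<Rightarrow> real) \<Rightarrow> bool" where
  "valuation X v \<longleftrightarrow> v {} = 0 \<and> (\<forall>S. S \<subseteq> X \<longrightarrow> 0 \<le> v S) \<and>
     (\<forall>A B. A \<subseteq> B \<and> B \<subseteq> X \<longrightarrow> v A \<le> v B)"

definition demand :: "'a set \<Rightarrow> ('a set \<Rightarrow> real) \<Rightarrow> ('a \<Rightarrow> real) \<Rightarrow> 'a set set" where
  "demand X v p = {S. S \<subseteq> X \<and> (\<forall>T. T \<subseteq> X \<longrightarrow> v T - sum p T \<le> v S - sum p S)}"

definition gross_substitutes :: "'a set \<Rightarrow> ('a set \<Rightarrow> real) \<Rightarrow> bool" where
  "gross_substitutes X v \<longleftrightarrow>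
     (\<forall>i\<in>X. \<forall>p q. (\<forall>x\<in>X. p x \<le> q x) \<and> q i = p i \<and> (\<exists>A\<in>demand X v p. i \<in> A)
        \<longrightarrow> (\<exists>A'\<in>demand X v q. i \<in> A'))"

definition nonempty_subsets :: "'a set \<Rightarrow> 'a set set" where
  "nonempty_subsets X = {S. S \<noteq> {} \<and> S \<subseteq> X}"

definition val_of :: "('a set \<Rightarrow> real) \<Rightarrow> 'a set \<Rightarrow> real" where
  "val_of f S = (if S = {} then 0 else f S)"

definition GS_set :: "'a set \<Rightarrow> ('a set \<Rightarrow> real) set" where
  "GS_set X = {f \<in> PiE (nonempty_subsets X) (\<lambda>_. UNIV).
      valuation X (val_of f) \<and> gross_substitutes X (val_of f)}"

end

theory Submission
  imports Defs
begin

lemma subsets3: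
  assumes "T \<subseteq> {i,j,k}"
  shows "T = {} \<or> T = {i} \<or> T = {j} \<or> T = {k} \<or> T = {i,j} \<or> T = {i,k} \<or> T = {j,k} \<or> T = {i,j,k}"
proof -
  have "T \<in> Pow {i,j,k}" using assms by simp
  thus ?thesis by (simp add: Pow_insert) blast
qed

lemma subsets2:
  assumes "T \<subseteq> {i,j}"
  shows "T = {} \<or> T = {i} \<or> T = {j} \<or> T = {i,j}"
proof -
  have "T \<in> Pow {i,j}" using assms by simp
  thus ?thesis by (simp add: Pow_insert) blast
qed

lemma big_price:
  assumes fin: "finite X" and val: "valuation X v" and P: "P \<subseteq> X"
    and pM: "\<forall>x\<in>X-P. p x = M" and M0: "M \<ge> 0" and T: "T \<subseteq> X" "\<not> T \<subseteq> P"
    and bd: "v X + (\<Sum>x\<in>P. \<bar>p x\<bar>) - M < B"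
  shows "v T - sum p T < B"
proof -
  have fT: "finite T" using fin T finite_subset by blast
  obtain y where y: "y \<in> T" "y \<notin> P" using T by blast
  have s: "sum p T = sum p (T \<inter> P) + sum p (T - P)"
    by (metis fT sum.Int_Diff)
  have "p y \<le> sum p (T - P)"
    by (rule member_le_sum) (use y fT pM T M0 in auto)
  hence h1: "M \<le> sum p (T - P)" using pM y T by auto
  have "- sum p (T \<inter> P) \<le> sum (\<lambda>x. \<bar>p x\<bar>) (T \<inter> P)"
    by (metis abs_ge_minus_self order.trans sum_abs sum_negf)
  also have "\<dots> \<le> (\<Sum>x\<in>P. \<bar>p x\<bar>)"
    by (rule sum_mono2) (use fin P finite_subset in auto)
  finally have h2: "- sum p (T \<inter> P) \<le> (\<Sum>x\<in>P. \<bar>p x\<bar>)" .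
  have "v T \<le> v X" using val T unfolding valuation_def by auto
  thus ?thesis using s h1 h2 bd by linarith
qed

lemma gs_viol:
  assumes gs: "gross_substitutes X v" and j: "j \<in> X"
    and A: "A \<in> demand X v p" "j \<in> A"
    and qp: "\<forall>x\<in>X. p x \<le> q x" "q j = p j"
    and B: "B \<subseteq> X"
    and strict: "\<And>S. S \<subseteq> X \<Longrightarrow> j \<in> S \<Longrightarrow> v S - sum q S < v B - sum q B"
  shows False
proof -
  from gs j A qp obtain A' where A': "A' \<in> demand X v q" "j \<in> A'"
    unfolding gross_substitutes_def by blast
  hence "A' \<subseteq> X" "v B - sum q B \<le> v A' - sum q A'" using B unfolding demand_def by auto
  with strict[OF this(1) A'(2)] show False by linarith
qed

lemma val_mono: "valuation X v \<Longrightarrow> A \<subseteq> B \<Longrightarrow> B \<subseteq> X \<Longrightarrow> v A \<le> v B"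
  unfolding valuation_def by blast
lemma val_nonneg: "valuation X v \<Longrightarrow> S \<subseteq> X \<Longrightarrow> 0 \<le> v S"
  unfolding valuation_def by blast
lemma val_empty: "valuation X v \<Longrightarrow> v {} = 0"
  unfolding valuation_def by blast

lemma S1:
  assumes fin: "finite X" and val: "valuation X v" and gs: "gross_substitutes X v"
    and ij: "i \<in> X" "j \<in> X" "i \<noteq> j"
  shows "v {i,j} \<le> v {i} + v {j}"
proof (rule ccontr)
  assume neg: "\<not> ?thesis"
  define a where "a = v {i}"
  define b where "b = v {i,j} - v {i}"
  define M where "M = v X + \<bar>a\<bar> + \<bar>b\<bar> + 2"
  define p where "p = (\<lambda>x. if x = i then a else if x = j then b else M)"
  define q where "q = p(i := a + 1)"
  have ji: "j \<noteq> i" using ij by auto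
  have pi: "p i = a" and pj: "p j = b" and qi: "q i = a + 1" and qj: "q j = b"
    using ji by (auto simp: p_def q_def)
  have pM: "\<forall>x\<in>X-{i,j}. p x = M" and qM: "\<forall>x\<in>X-{i,j}. q x = M"
    by (auto simp: p_def q_def)
  have P: "{i,j} \<subseteq> X" using ij by auto
  have M0: "M \<ge> 0" unfolding M_def using val_nonneg[OF val, of X] by simp
  have v0: "v {} = 0" using val_empty[OF val] .
  have dem: "{i,j} \<in> demand X v p"
    unfolding demand_def
  proof (intro CollectI conjI allI impI)
    show "{i,j} \<subseteq> X" using P .
    fix T assume T: "T \<subseteq> X"
    show "v T - sum p T \<le> v {i, j} - sum p {i, j}"
    proof (cases "T \<subseteq> {i,j}")
      case True
      have m: "v {j} \<le> v {i,j}" using val_mono[OF val, of "{j}" "{i,j}"] P by auto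
      from subsets2[OF True] show ?thesis
        by (elim disjE) (use neg ij v0 m in \<open>simp_all add: pi pj a_def b_def\<close>)
    next
      case False
      have s: "(\<Sum>x\<in>{i,j}. \<bar>p x\<bar>) = \<bar>a\<bar> + \<bar>b\<bar>" using ij by (simp add: pi pj)
      have "v T - sum p T < 0"
        by (rule big_price[OF fin val P pM M0 T False]) (simp add: s M_def)
      then show ?thesis using ij by (simp add: pi pj a_def b_def)
    qed
  qed
  show False
  proof (rule gs_viol[OF gs ij(2) dem _ _ _ empty_subsetI])
    show "j \<in> {i,j}" by simp
    show "\<forall>x\<in>X. p x \<le> q x" by (simp add: q_def pi)
    show "q j = p j" using qj pj by simp
    fix S assume S: "S \<subseteq> X" "j \<in> S"
    show "v S - sum q S < v {} - sum q {}"
    proof (cases "S \<subseteq> {i,j}")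
      case True
      from subsets2[OF True] S(2) ij have "S = {j} \<or> S = {i,j}" by auto
      then show ?thesis
        by (elim disjE) (use neg ij v0 in \<open>simp_all add: qi qj a_def b_def\<close>)
    next
      case False
      have s: "(\<Sum>x\<in>{i,j}. \<bar>q x\<bar>) = \<bar>a+1\<bar> + \<bar>b\<bar>" using ij by (simp add: qi qj)
      have "v S - sum q S < 0"
        by (rule big_price[OF fin val P qM M0 S(1) False]) (simp add: s M_def)
      then show ?thesis using v0 by simp
    qed
  qed
qed

lemma S2:
  assumes fin: "finite X" and val: "valuation X v" and gs: "gross_substitutes X v"
    and ijk: "i \<in> X" "j \<in> X" "k \<in> X" "i \<noteq> j" "i \<noteq> k" "j \<noteq> k"
  shows "v {i,j,k} + v {i} \<le> v {i,j} + v {i,k}"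
proof (rule ccontr)
  assume neg: "\<not> ?thesis"
  define bj where "bj = v {i,j} - v {i}"
  define bk where "bk = v {i,j,k} - v {i,j}"
  define M where "M = v X + \<bar>bj\<bar> + \<bar>bk\<bar> + 4"
  define p where "p = (\<lambda>x. if x = i then -1 else if x = j then bj else if x = k then bk else M)"
  define q where "q = p(j := bj + 1)"
  have d: "j \<noteq> i" "k \<noteq> i" "k \<noteq> j" using ijk by auto
  have pi: "p i = -1" and pj: "p j = bj" and pk: "p k = bk"
    and qi: "q i = -1" and qj: "q j = bj + 1" and qk: "q k = bk"
    using d by (auto simp: p_def q_def)
  have pM: "\<forall>x\<in>X-{i,j,k}. p x = M" and qM: "\<forall>x\<in>X-{i,j,k}. q x = M"
    by (auto simp: p_def q_def)
  have P: "{i,j,k} \<subseteq> X" using ijk by auto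
  have M0: "M \<ge> 0" unfolding M_def using val_nonneg[OF val, of X] by simp
  have v0: "v {} = 0" using val_empty[OF val] .
  have vi: "0 \<le> v {i}" using val_nonneg[OF val, of "{i}"] ijk by auto
  have m1: "v {j} \<le> v {i,j}" using val_mono[OF val, of "{j}" "{i,j}"] P by auto
  have m2: "v {k} \<le> v {i,k}" using val_mono[OF val, of "{k}" "{i,k}"] P by auto
  have m3: "v {j,k} \<le> v {i,j,k}" using val_mono[OF val, of "{j,k}" "{i,j,k}"] P by auto
  have dem: "{i,j,k} \<in> demand X v p"
    unfolding demand_def
  proof (intro CollectI conjI allI impI)
    show "{i,j,k} \<subseteq> X" using P .
    fix T assume T: "T \<subseteq> X"
    show "v T - sum p T \<le> v {i,j,k} - sum p {i,j,k}"
    proof (cases "T \<subseteq> {i,j,k}")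
      case True
      from subsets3[OF True] show ?thesis
        by (elim disjE) (use neg ijk v0 vi m1 m2 m3 in \<open>simp_all add: pi pj pk bj_def bk_def\<close>)
    next
      case False
      have s: "(\<Sum>x\<in>{i,j,k}. \<bar>p x\<bar>) = 1 + \<bar>bj\<bar> + \<bar>bk\<bar>" using ijk by (simp add: pi pj pk)
      have "v T - sum p T < 0"
        by (rule big_price[OF fin val P pM M0 T False]) (simp add: s M_def)
      then show ?thesis using ijk vi by (simp add: pi pj pk bj_def bk_def)
    qed
  qed
  show False
  proof (rule gs_viol[OF gs ijk(3) dem _ _ _ _])
    show "k \<in> {i,j,k}" by simp
    show "\<forall>x\<in>X. p x \<le> q x" by (simp add: q_def pj)
    show "q k = p k" using qk pk by simp
    show "{i} \<subseteq> X" using ijk by simp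
    fix S assume S: "S \<subseteq> X" "k \<in> S"
    show "v S - sum q S < v {i} - sum q {i}"
    proof (cases "S \<subseteq> {i,j,k}")
      case True
      from subsets3[OF True] S(2) ijk have "S = {k} \<or> S = {i,k} \<or> S = {j,k} \<or> S = {i,j,k}" by auto
      then show ?thesis
        by (elim disjE) (use neg ijk v0 vi m1 m2 m3 in \<open>simp_all add: qi qj qk bj_def bk_def\<close>)
    next
      case False
      have s: "(\<Sum>x\<in>{i,j,k}. \<bar>q x\<bar>) = 1 + \<bar>bj+1\<bar> + \<bar>bk\<bar>" using ijk by (simp add: qi qj qk)
      have "v S - sum q S < 0"
        by (rule big_price[OF fin val P qM M0 S(1) False]) (simp add: s M_def)
      then show ?thesis using vi qi by simp
    qed
  qed
qed

lemma triple:
  assumes fin: "finite X" and val: "valuation X v" and gs: "gross_substitutes X v"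
    and ijk: "i \<in> X" "j \<in> X" "k \<in> X" "i \<noteq> j" "i \<noteq> k" "j \<noteq> k"
    and ab: "v {i,k} + v {j} < v {i,j} + v {k}"
    and ac: "v {j,k} + v {i} < v {i,j} + v {k}"
  shows False
proof -
  have s1: "v {i,j} \<le> v {i} + v {j}" using S1[OF fin val gs ijk(1,2,4)] .
  have s2: "v {i,j,k} + v {i} \<le> v {i,j} + v {i,k}" using S2[OF fin val gs ijk] .
  define x1 where "x1 = v {i}"
  define x2 where "x2 = v {j}"
  define x3 where "x3 = v {k}"
  define x12 where "x12 = v {i,j}"
  define x13 where "x13 = v {i,k}"
  define x23 where "x23 = v {j,k}"
  define x123 where "x123 = v {i,j,k}"
  define U where "U = ((x1 + x2 - x12) + min (x12 + x3 - x123) (x12 + 2*x3 - x13 - x23)) / 2"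
  define t where "t = (max (x13 - x3) (x1 - U) + min (x12 - x2) (x12 + x3 - x23 - U)) / 2"
  have U1: "x1 + x2 - x12 < U" and U2: "U \<le> x12 + x3 - x123" and U3: "U < x12 + 2*x3 - x13 - x23"
    using s1 s2 ab ac unfolding U_def x1_def x2_def x3_def x12_def x13_def x23_def x123_def
    by (auto simp: min_def)
  have U0: "0 < U" using U1 s1 unfolding x1_def x2_def x12_def by linarith
  have t1: "x13 - x3 \<le> t" and t2: "x1 - U \<le> t" and t3: "t < x12 - x2" and t4: "t < x12 + x3 - x23 - U"
    using U1 U2 U3 ab ac unfolding t_def x1_def x2_def x3_def x12_def x13_def x23_def x123_def
    by (auto simp: min_def max_def)
  define bj where "bj = x12 - U - t"
  define bk where "bk = x3 - U"
  define M where "M = v X + \<bar>t\<bar> + \<bar>bj\<bar> + \<bar>bk\<bar> + 2"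
  define p where "p = (\<lambda>x. if x = i then t else if x = j then bj else if x = k then bk else M)"
  define q where "q = p(i := t + 1)"
  have d: "j \<noteq> i" "k \<noteq> i" "k \<noteq> j" using ijk by auto
  have pi: "p i = t" and pj: "p j = bj" and pk: "p k = bk"
    and qi: "q i = t + 1" and qj: "q j = bj" and qk: "q k = bk"
    using d by (auto simp: p_def q_def)
  have pM: "\<forall>x\<in>X-{i,j,k}. p x = M" and qM: "\<forall>x\<in>X-{i,j,k}. q x = M"
    by (auto simp: p_def q_def)
  have P: "{i,j,k} \<subseteq> X" using ijk by auto
  have M0: "M \<ge> 0" unfolding M_def using val_nonneg[OF val, of X] by simp
  have v0: "v {} = 0" using val_empty[OF val] .
  note defs = x1_def[symmetric] x2_def[symmetric] x3_def[symmetric] x12_def[symmetric]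
     x13_def[symmetric] x23_def[symmetric] x123_def[symmetric]
  have dem: "{i,j} \<in> demand X v p"
    unfolding demand_def
  proof (intro CollectI conjI allI impI)
    show "{i,j} \<subseteq> X" using P by simp
    fix T assume T: "T \<subseteq> X"
    show "v T - sum p T \<le> v {i,j} - sum p {i,j}"
    proof (cases "T \<subseteq> {i,j,k}")
      case True
      from subsets3[OF True] show ?thesis
        by (elim disjE) (use ijk v0 U0 t1 t2 t3 t4 U2 in \<open>simp_all add: pi pj pk bj_def bk_def defs\<close>)
    next
      case False
      have s: "(\<Sum>x\<in>{i,j,k}. \<bar>p x\<bar>) = \<bar>t\<bar> + \<bar>bj\<bar> + \<bar>bk\<bar>" using ijk by (simp add: pi pj pk)
      have "v T - sum p T < 0"
        by (rule big_price[OF fin val P pM M0 T False]) (simp add: s M_def)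
      then show ?thesis using ijk U0 by (simp add: pi pj bj_def defs)
    qed
  qed
  show False
  proof (rule gs_viol[OF gs ijk(2) dem _ _ _ _])
    show "j \<in> {i,j}" by simp
    show "\<forall>x\<in>X. p x \<le> q x" by (simp add: q_def pi)
    show "q j = p j" using qj pj by simp
    show "{k} \<subseteq> X" using ijk by simp
    fix S assume S: "S \<subseteq> X" "j \<in> S"
    show "v S - sum q S < v {k} - sum q {k}"
    proof (cases "S \<subseteq> {i,j,k}")
      case True
      from subsets3[OF True] S(2) ijk have "S = {j} \<or> S = {i,j} \<or> S = {j,k} \<or> S = {i,j,k}" by auto
      then show ?thesis
        by (elim disjE) (use ijk v0 U0 t1 t2 t3 t4 U2 in \<open>simp_all add: qi qj qk bj_def bk_def defs\<close>)
    next
      case False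
      have s: "(\<Sum>x\<in>{i,j,k}. \<bar>q x\<bar>) = \<bar>t+1\<bar> + \<bar>bj\<bar> + \<bar>bk\<bar>" using ijk by (simp add: qi qj qk)
      have "v S - sum q S < 0"
        by (rule big_price[OF fin val P qM M0 S(1) False]) (simp add: s M_def)
      then show ?thesis using U0 qk by (simp add: bk_def defs)
    qed
  qed
qed

lemma lip:
  fixes r1 r2 :: "'a \<Rightarrow> real"
  assumes fin: "finite X" and S: "S \<subseteq> X" and d0: "0 \<le> d"
    and b: "\<forall>x\<in>X. \<bar>r1 x - r2 x\<bar> \<le> d"
  shows "\<bar>(v S - sum r1 S) - (v S - sum r2 S)\<bar> \<le> real (card X) * d"
proof -
  have fS: "finite S" using fin S finite_subset by blast
  have "\<bar>(v S - sum r1 S) - (v S - sum r2 S)\<bar> = \<bar>sum (\<lambda>x. r1 x - r2 x) S\<bar>"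
    by (simp add: sum_subtractf)
  also have "\<dots> \<le> sum (\<lambda>x. \<bar>r1 x - r2 x\<bar>) S" by (rule sum_abs)
  also have "\<dots> \<le> real (card S) * d"
    using sum_bounded_above[of S "\<lambda>x. \<bar>r1 x - r2 x\<bar>" d] b S by auto
  also have "\<dots> \<le> real (card X) * d"
    using card_mono[OF fin S] d0 by (simp add: mult_right_mono)
  finally show ?thesis .
qed

lemma pert_sum:
  fixes p :: "'a \<Rightarrow> real"
  assumes "finite S"
  shows "sum (\<lambda>x. p x + (if x \<in> A then - e else e)) S
       = sum p S - e * real (card (S \<inter> A)) + e * real (card (S - A))"
proof -
  have "sum (\<lambda>x. (if x \<in> A then - e else e)) S = sum (\<lambda>x. - e) (S \<inter> A) + sum (\<lambda>x. e) (S - A)"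
    using assms by (simp add: sum.If_cases Diff_eq)
  thus ?thesis by (simp add: sum.distrib)
qed

lemma pert:
  fixes p :: "'a \<Rightarrow> real"
  assumes fin: "finite X" and A: "A \<subseteq> X" and T: "T \<subseteq> X" "T \<noteq> A" and e: "0 < e"
    and le: "v T - sum p T \<le> v A - sum p A"
  shows "v T - sum (\<lambda>x. p x + (if x \<in> A then - e else e)) T
       \<le> v A - sum (\<lambda>x. p x + (if x \<in> A then - e else e)) A - e"
proof -
  have fT: "finite T" and fA: "finite A" using fin T A finite_subset by blast+
  have c: "real (card (T \<inter> A)) - real (card (T - A)) - real (card A) \<le> -1"
  proof (cases "T - A = {}")
    case True
    hence "T \<subset> A" using T by auto
    hence "card T < card A" using fA psubset_card_mono by blast
    moreover have "T \<inter> A = T" using True by auto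
    ultimately show ?thesis by simp
  next
    case False
    hence "card (T - A) \<ge> 1" using fT by (simp add: Suc_le_eq card_gt_0_iff)
    moreover have "card (T \<inter> A) \<le> card A" using fA by (simp add: card_mono)
    ultimately show ?thesis by linarith
  qed
  have "e * (real (card (T \<inter> A)) - real (card (T - A)) - real (card A)) \<le> e * (-1)"
    using c e by (intro mult_left_mono) auto
  moreover have "sum (\<lambda>x. p x + (if x \<in> A then - e else e)) A = sum p A - e * real (card A)"
    using pert_sum[OF fA, of p A e] by simp
  moreover note pert_sum[OF fT, of p A e]
  ultimately show ?thesis using le by (simp add: algebra_simps)
qed

lemma gs_rat:
  fixes v :: "'a set \<Rightarrow> real"
  assumes fin: "finite X"
    and H: "\<forall>i\<in>X. \<forall>p\<in>PiE X (\<lambda>_. \<rat>). \<forall>q\<in>PiE X (\<lambda>_. \<rat>).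
              (\<forall>x\<in>X. p x \<le> q x) \<and> q i = p i \<and> (\<exists>A\<in>demand X v p. i \<in> A)
              \<longrightarrow> (\<exists>A'\<in>demand X v q. i \<in> A')"
  shows "gross_substitutes X v"
  unfolding gross_substitutes_def
proof (intro ballI allI impI)
  fix i p q
  assume i: "i \<in> X"
  assume pq: "(\<forall>x\<in>X. p x \<le> q x) \<and> q i = p i \<and> (\<exists>A\<in>demand X v p. i \<in> A)"
  then obtain A where A: "A \<in> demand X v p" "i \<in> A" and pq1: "\<forall>x\<in>X. p x \<le> q x" and pq2: "q i = p i"
    by blast
  have AX: "A \<subseteq> X" and Amax: "\<And>T. T \<subseteq> X \<Longrightarrow> v T - sum p T \<le> v A - sum p A"
    using A unfolding demand_def by auto
  show "\<exists>A'\<in>demand X v q. i \<in> A'"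
  proof (rule ccontr)
    assume N: "\<not> ?thesis"
    define m where "m = real (card X)"
    have m1: "1 \<le> m" unfolding m_def using i fin card_gt_0_iff[of X] by (auto simp: Suc_le_eq)
    let ?u = "\<lambda>r S. v S - sum r S"
    have finP: "finite (Pow X)" using fin by simp
    define Mx where "Mx = Max (?u q ` Pow X)"
    have "Mx \<in> ?u q ` Pow X" unfolding Mx_def by (rule Max_in) (use finP in auto)
    then obtain Ts where Ts: "Ts \<in> Pow X" "?u q Ts = Mx" by auto
    have Tsmax: "\<And>T. T \<subseteq> X \<Longrightarrow> ?u q T \<le> Mx"
      unfolding Mx_def using finP by (intro Max_ge) auto
    define F where "F = {A'. A' \<subseteq> X \<and> i \<in> A'}"
    have finF: "finite F" unfolding F_def using fin by simp
    have neF: "F \<noteq> {}" unfolding F_def using i by auto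
    have Flt: "\<And>A'. A' \<in> F \<Longrightarrow> ?u q A' < Mx"
    proof -
      fix A' assume A': "A' \<in> F"
      have "A' \<notin> demand X v q" using N A' unfolding F_def by auto
      hence "\<not> (\<forall>T. T \<subseteq> X \<longrightarrow> ?u q T \<le> ?u q A')" using A' unfolding F_def demand_def by simp
      then obtain T where T: "T \<subseteq> X" "\<not> ?u q T \<le> ?u q A'" by blast
      thus "?u q A' < Mx" using Tsmax[OF T(1)] by linarith
    qed
    define \<gamma> where "\<gamma> = Min ((\<lambda>A'. Mx - ?u q A') ` F)"
    have g0: "0 < \<gamma>" unfolding \<gamma>_def using finF neF Flt by (simp add: Min_gr_iff)
    have gF: "\<And>A'. A' \<in> F \<Longrightarrow> ?u q A' \<le> Mx - \<gamma>"
    proof -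
      fix A' assume "A' \<in> F"
      hence "\<gamma> \<le> Mx - ?u q A'" unfolding \<gamma>_def using finF by (intro Min_le) auto
      thus "?u q A' \<le> Mx - \<gamma>" by simp
    qed
    define e where "e = \<gamma> / (8 * m)"
    define \<eta> where "\<eta> = e / (4 * m)"
    have e0: "0 < e" unfolding e_def using g0 m1 by simp
    have eta0: "0 < \<eta>" unfolding \<eta>_def using e0 m1 by simp
    have me: "m * e = \<gamma> / 8" unfolding e_def using m1 by simp
    have meta: "m * \<eta> = e / 4" unfolding \<eta>_def using m1 by simp
    define p' where "p' = (\<lambda>x. p x + (if x \<in> A then - e else e))"
    have "\<forall>x. \<exists>r. r \<in> \<rat> \<and> \<bar>r - p' x\<bar> < \<eta>"
    proof
      fix x
      obtain r where "r \<in> \<rat>" "p' x - \<eta> < r" "r < p' x + \<eta>"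
        using Rats_dense_in_real[of "p' x - \<eta>" "p' x + \<eta>"] eta0 by auto
      thus "\<exists>r. r \<in> \<rat> \<and> \<bar>r - p' x\<bar> < \<eta>" by (intro exI[of _ r]) auto
    qed
    then have "\<exists>f. \<forall>x. f x \<in> \<rat> \<and> \<bar>f x - p' x\<bar> < \<eta>" by (rule choice)
    then obtain P1 where P1a: "\<forall>x. P1 x \<in> \<rat> \<and> \<bar>P1 x - p' x\<bar> < \<eta>" by blast
    have P1: "\<And>x. P1 x \<in> \<rat>" "\<And>x. \<bar>P1 x - p' x\<bar> < \<eta>" using P1a by auto
    have "\<forall>x. \<exists>r. r \<in> \<rat> \<and> (0 \<le> q x - p x \<longrightarrow> 0 \<le> r) \<and> \<bar>r - (q x - p x)\<bar> < \<eta> \<and> (q x = p x \<longrightarrow> r = 0)"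
    proof
      fix x
      consider "q x - p x = 0" | "q x - p x > 0" | "q x - p x < 0" by linarith
      thus "\<exists>r. r \<in> \<rat> \<and> (0 \<le> q x - p x \<longrightarrow> 0 \<le> r) \<and> \<bar>r - (q x - p x)\<bar> < \<eta> \<and> (q x = p x \<longrightarrow> r = 0)"
      proof cases
        case 1 thus ?thesis using eta0 by (intro exI[of _ 0]) auto
      next
        case 2
        obtain r where "r \<in> \<rat>" "max 0 (q x - p x - \<eta>) < r" "r < q x - p x"
          using Rats_dense_in_real[of "max 0 (q x - p x - \<eta>)" "q x - p x"] 2 eta0 by auto
        thus ?thesis using 2 by (intro exI[of _ r]) auto
      next
        case 3
        obtain r where "r \<in> \<rat>" "q x - p x - \<eta> < r" "r < q x - p x"
          using Rats_dense_in_real[of "q x - p x - \<eta>" "q x - p x"] eta0 by auto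
        thus ?thesis using 3 by (intro exI[of _ r]) auto
      qed
    qed
    then have "\<exists>f. \<forall>x. f x \<in> \<rat> \<and> (0 \<le> q x - p x \<longrightarrow> 0 \<le> f x) \<and> \<bar>f x - (q x - p x)\<bar> < \<eta> \<and> (q x = p x \<longrightarrow> f x = 0)"
      by (rule choice)
    then obtain R where Ra: "\<forall>x. R x \<in> \<rat> \<and> (0 \<le> q x - p x \<longrightarrow> 0 \<le> R x) \<and> \<bar>R x - (q x - p x)\<bar> < \<eta> \<and> (q x = p x \<longrightarrow> R x = 0)"
      by blast
    have R: "\<And>x. R x \<in> \<rat>" "\<And>x. 0 \<le> q x - p x \<Longrightarrow> 0 \<le> R x"
      "\<And>x. \<bar>R x - (q x - p x)\<bar> < \<eta>" "\<And>x. q x = p x \<Longrightarrow> R x = 0" using Ra by auto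
    define p2 where "p2 = restrict P1 X"
    define q2 where "q2 = restrict (\<lambda>x. P1 x + R x) X"
    have p2Q: "p2 \<in> PiE X (\<lambda>_. \<rat>)" unfolding p2_def using P1(1) by auto
    have q2Q: "q2 \<in> PiE X (\<lambda>_. \<rat>)" unfolding q2_def using P1(1) R(1) by (auto intro: Rats_add)
    have pq2le: "\<forall>x\<in>X. p2 x \<le> q2 x"
    proof
      fix x assume "x \<in> X"
      hence "0 \<le> R x" using R(2)[of x] pq1 by simp
      thus "p2 x \<le> q2 x" unfolding p2_def q2_def using \<open>x \<in> X\<close> by simp
    qed
    have pq2i: "q2 i = p2 i" unfolding p2_def q2_def using R(4)[of i] pq2 i by simp
    have lip1: "\<And>S. S \<subseteq> X \<Longrightarrow> \<bar>?u p2 S - ?u p' S\<bar> \<le> m * \<eta>"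
      unfolding m_def
      by (rule lip[OF fin _ less_imp_le[OF eta0]]) (use P1(2) in \<open>auto simp: p2_def less_imp_le\<close>)
    have Adem2: "A \<in> demand X v p2"
      unfolding demand_def
    proof (intro CollectI conjI allI impI)
      show "A \<subseteq> X" using AX .
      fix T assume T: "T \<subseteq> X"
      show "?u p2 T \<le> ?u p2 A"
      proof (cases "T = A")
        case False
        have "?u p' T \<le> ?u p' A - e"
          unfolding p'_def by (rule pert[OF fin AX T False e0 Amax[OF T]])
        thus ?thesis using lip1[OF T] lip1[OF AX] meta e0 by linarith
      qed simp
    qed
    have "\<exists>A'\<in>demand X v q2. i \<in> A'"
      using H i p2Q q2Q pq2le pq2i Adem2 A(2) by blast
    then obtain A2 where A2: "A2 \<in> demand X v q2" "i \<in> A2" by blast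
    have A2X: "A2 \<subseteq> X" and A2max: "?u q2 Ts \<le> ?u q2 A2"
      using A2 Ts(1) unfolding demand_def by auto
    have A2F: "A2 \<in> F" unfolding F_def using A2X A2(2) by simp
    have qb: "\<forall>x\<in>X. \<bar>q2 x - q x\<bar> \<le> e + 2 * \<eta>"
    proof
      fix x assume x: "x \<in> X"
      have "\<bar>P1 x - p x\<bar> \<le> \<bar>P1 x - p' x\<bar> + e" unfolding p'_def using e0 by auto
      hence "\<bar>P1 x - p x\<bar> \<le> \<eta> + e" using P1(2)[of x] by linarith
      moreover have "\<bar>R x - (q x - p x)\<bar> \<le> \<eta>" using R(3)[of x] by linarith
      ultimately show "\<bar>q2 x - q x\<bar> \<le> e + 2 * \<eta>" unfolding q2_def using x by auto
    qed
    have lip2: "\<And>S. S \<subseteq> X \<Longrightarrow> \<bar>?u q2 S - ?u q S\<bar> \<le> m * (e + 2 * \<eta>)"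
      unfolding m_def
      by (rule lip[OF fin _ _ qb]) (use e0 eta0 in auto)
    have "?u q Ts - m * (e + 2 * \<eta>) \<le> ?u q A2 + m * (e + 2 * \<eta>)"
      using lip2[of Ts] lip2[OF A2X] A2max Ts(1) by auto
    hence "Mx - \<gamma> / 4 - e \<le> ?u q A2" using Ts(2) me meta by (simp add: algebra_simps)
    moreover have "e \<le> \<gamma> / 8" using mult_right_mono[OF m1 less_imp_le[OF e0]] me by simp
    ultimately show False using gF[OF A2F] g0 by linarith
  qed
qed

lemma val_of_meas:
  "(\<lambda>f. val_of f T) \<in> borel_measurable (PiM I (\<lambda>_. lborel))"
proof (cases "T = {}")
  case True then show ?thesis by (simp add: val_of_def)
next
  case F: False
  show ?thesis
  proof (cases "T \<in> I")
    case True
    have "(\<lambda>f. f T) \<in> measurable (PiM I (\<lambda>_. lborel)) lborel"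
      by (rule measurable_component_singleton[OF True])
    hence "(\<lambda>f. f T) \<in> borel_measurable (PiM I (\<lambda>_. lborel))" by simp
    then show ?thesis using F by (simp add: val_of_def)
  next
    case False
    have "(\<lambda>f. undefined) \<in> borel_measurable (PiM I (\<lambda>_. lborel))" by simp
    then show ?thesis
      by (rule measurable_cong[THEN iffD1, rotated])
         (use False F in \<open>auto simp: val_of_def space_PiM PiE_def extensional_def\<close>)
  qed
qed

lemma hyper_null:
  fixes h :: "('b \<Rightarrow> real) \<Rightarrow> real"
  assumes fin: "finite I" and s: "s \<in> I"
    and hm[measurable]: "h \<in> borel_measurable (PiM I (\<lambda>_. lborel))"
    and hind: "\<And>f y. h (f(s := y)) = h f"
  shows "{f \<in> space (PiM I (\<lambda>_. lborel)). f s = h f} \<in> null_sets (PiM I (\<lambda>_. lborel))"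
proof -
  interpret product_sigma_finite "\<lambda>_. lborel::real measure" by standard
  define J where "J = I - {s}"
  have IJ: "I = insert s J" and sJ: "s \<notin> J" and finJ: "finite J" using s fin by (auto simp: J_def)
  let ?H = "{f \<in> space (PiM I (\<lambda>_. lborel)). f s = h f}"
  have cs: "(\<lambda>f. f s) \<in> borel_measurable (PiM I (\<lambda>_. lborel))"
    using measurable_component_singleton[OF s, of "\<lambda>_. lborel"] by simp
  have Hm: "?H \<in> sets (PiM I (\<lambda>_. lborel))"
    using cs hm by measurable
  have "emeasure (PiM I (\<lambda>_. lborel)) ?H = (\<integral>\<^sup>+ f. indicator ?H f \<partial>PiM I (\<lambda>_. lborel))"
    using Hm by simp
  also have "\<dots> = (\<integral>\<^sup>+ x. (\<integral>\<^sup>+ y. indicator ?H (x(s := y)) \<partial>lborel) \<partial>PiM J (\<lambda>_. lborel))"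
    unfolding IJ by (rule product_nn_integral_insert[OF finJ sJ]) (use Hm IJ in simp)
  also have "\<dots> = (\<integral>\<^sup>+ x. (\<integral>\<^sup>+ y. indicator {h x} y \<partial>lborel) \<partial>PiM J (\<lambda>_. lborel))"
  proof (rule nn_integral_cong, rule nn_integral_cong)
    fix x :: "'b \<Rightarrow> real" and y :: real assume x: "x \<in> space (PiM J (\<lambda>_. lborel))"
    have "x(s := y) \<in> space (PiM I (\<lambda>_. lborel))"
      using x unfolding IJ by (auto simp: space_PiM PiE_def extensional_def)
    moreover have "h (x(s := y)) = h x" by (rule hind)
    ultimately show "indicator ?H (x(s := y)) = (indicator {h x} y :: ennreal)"
      by (auto simp: indicator_def)
  qed
  also have "\<dots> = 0" by simp
  finally show ?thesis using Hm by auto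
qed

lemma demand_alt:
  "(\<exists>A\<in>demand X v p. i \<in> A) \<longleftrightarrow> (\<exists>A\<in>Pow X. i \<in> A \<and> (\<forall>T\<in>Pow X. v T - sum p T \<le> v A - sum p A))"
  unfolding demand_def by auto

lemma valuation_alt:
  "valuation X v \<longleftrightarrow> v {} = 0 \<and> (\<forall>S\<in>Pow X. 0 \<le> v S) \<and> (\<forall>A\<in>Pow X. \<forall>B\<in>Pow X. A \<subseteq> B \<longrightarrow> v A \<le> v B)"
  unfolding valuation_def by auto

lemma gs_iff:
  fixes v :: "'a set \<Rightarrow> real"
  assumes fin: "finite X"
  shows "gross_substitutes X v \<longleftrightarrow> (\<forall>i\<in>X. \<forall>p\<in>PiE X (\<lambda>_. \<rat>). \<forall>q\<in>PiE X (\<lambda>_. \<rat>).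
              (\<forall>x\<in>X. p x \<le> q x) \<and> q i = p i \<and> (\<exists>A\<in>demand X v p. i \<in> A)
              \<longrightarrow> (\<exists>A'\<in>demand X v q. i \<in> A'))"
proof
  assume "gross_substitutes X v"
  thus "\<forall>i\<in>X. \<forall>p\<in>PiE X (\<lambda>_. \<rat>). \<forall>q\<in>PiE X (\<lambda>_. \<rat>).
              (\<forall>x\<in>X. p x \<le> q x) \<and> q i = p i \<and> (\<exists>A\<in>demand X v p. i \<in> A)
              \<longrightarrow> (\<exists>A'\<in>demand X v q. i \<in> A')"
    unfolding gross_substitutes_def by blast
qed (rule gs_rat[OF fin])

lemma val_of_empty: "val_of f {} = 0" by (simp add: val_of_def)

lemma val_of_meas_borel:
  "(\<lambda>f. val_of f T) \<in> borel_measurable (PiM I (\<lambda>_. borel))"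
proof -
  have "sets (PiM I (\<lambda>_. borel)) = sets (PiM I (\<lambda>_. lborel::real measure))"
    by (intro sets_PiM_cong) auto
  thus ?thesis using val_of_meas[of T I] measurable_cong_sets by blast
qed

lemma dem_meas:
  assumes finP: "finite (Pow X)"
  shows "{f \<in> space (PiM I (\<lambda>_. lborel)). \<exists>A\<in>Pow X. i \<in> A \<and> (\<forall>T\<in>Pow X. val_of f T - sum r T \<le> val_of f A - sum r A)}
     \<in> sets (PiM I (\<lambda>_. lborel))"
proof (rule sets.sets_Collect_finite_Ex[OF _ finP])
  fix A :: "'a set"
  show "{f \<in> space (PiM I (\<lambda>_. lborel)). i \<in> A \<and> (\<forall>T\<in>Pow X. val_of f T - sum r T \<le> val_of f A - sum r A)}
     \<in> sets (PiM I (\<lambda>_. lborel))"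
  proof (cases "i \<in> A")
    case True
    have "{f \<in> space (PiM I (\<lambda>_. lborel)). \<forall>T\<in>Pow X. val_of f T - sum r T \<le> val_of f A - sum r A}
     \<in> sets (PiM I (\<lambda>_. lborel))"
    proof (rule sets.sets_Collect_finite_All[OF _ finP])
      fix T :: "'a set"
      show "{f \<in> space (PiM I (\<lambda>_. lborel)). val_of f T - sum r T \<le> val_of f A - sum r A}
        \<in> sets (PiM I (\<lambda>_. lborel))"
        by (rule borel_measurable_le; rule borel_measurable_diff[OF val_of_meas borel_measurable_const])
    qed
    then show ?thesis using True by simp
  qed simp
qed

lemma coll_conj: "{x \<in> A. P x \<and> Q x} = {x \<in> A. P x} \<inter> {x \<in> A. Q x}"
  by blast

lemma GS_meas:
  assumes fin: "finite X"
  shows "GS_set X \<in> sets (PiM (nonempty_subsets X) (\<lambda>_. lborel))"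
proof -
  let ?M = "PiM (nonempty_subsets X) (\<lambda>_. lborel)"
  let ?\<Omega> = "space ?M"
  let ?Q = "PiE X (\<lambda>_. \<rat>)"
  have sp: "?\<Omega> = PiE (nonempty_subsets X) (\<lambda>_. UNIV)" by (simp add: space_PiM)
  have cQ: "countable ?Q" using fin countable_rat by (intro countable_PiE) auto
  note vm[measurable] = val_of_meas[of _ "nonempty_subsets X"] val_of_meas_borel[of _ "nonempty_subsets X"]
  have finP: "finite (Pow X)" using fin by simp
  have eq: "GS_set X = {f \<in> ?\<Omega>. valuation X (val_of f)} \<inter>
     {f \<in> ?\<Omega>. \<forall>i\<in>X. \<forall>p\<in>?Q. \<forall>q\<in>?Q. (\<forall>x\<in>X. p x \<le> q x) \<and> q i = p i \<and> (\<exists>A\<in>demand X (val_of f) p. i \<in> A)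
              \<longrightarrow> (\<exists>A'\<in>demand X (val_of f) q. i \<in> A')}"
    unfolding GS_set_def sp gs_iff[OF fin] by (rule coll_conj)
  have m1: "{f \<in> ?\<Omega>. valuation X (val_of f)} \<in> sets ?M"
  proof -
    have e: "{f \<in> ?\<Omega>. valuation X (val_of f)} = {f \<in> ?\<Omega>. \<forall>S\<in>Pow X. 0 \<le> val_of f S} \<inter>
       {f \<in> ?\<Omega>. \<forall>A\<in>Pow X. \<forall>B\<in>Pow X. A \<subseteq> B \<longrightarrow> val_of f A \<le> val_of f B}"
      unfolding valuation_alt val_of_empty simp_thms by (rule coll_conj)
    have a: "{f \<in> ?\<Omega>. \<forall>S\<in>Pow X. 0 \<le> val_of f S} \<in> sets ?M" using finP by measurable
    have b: "{f \<in> ?\<Omega>. \<forall>A\<in>Pow X. \<forall>B\<in>Pow X. A \<subseteq> B \<longrightarrow> val_of f A \<le> val_of f B} \<in> sets ?M"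
    proof (rule sets.sets_Collect_finite_All[OF _ finP], rule sets.sets_Collect_finite_All[OF _ finP])
      fix A B :: "'a set"
      show "{f \<in> ?\<Omega>. A \<subseteq> B \<longrightarrow> val_of f A \<le> val_of f B} \<in> sets ?M"
      proof (cases "A \<subseteq> B")
        case True
        then show ?thesis using borel_measurable_le[OF val_of_meas val_of_meas] by simp
      qed simp
    qed
    show ?thesis unfolding e using a b by blast
  qed
  have m2: "{f \<in> ?\<Omega>. \<forall>i\<in>X. \<forall>p\<in>?Q. \<forall>q\<in>?Q. (\<forall>x\<in>X. p x \<le> q x) \<and> q i = p i \<and> (\<exists>A\<in>demand X (val_of f) p. i \<in> A)
              \<longrightarrow> (\<exists>A'\<in>demand X (val_of f) q. i \<in> A')} \<in> sets ?M"
  proof (rule sets.sets_Collect_finite_All[OF _ fin], rule sets.sets_Collect_countable_All'[OF _ cQ],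
      rule sets.sets_Collect_countable_All'[OF _ cQ])
    fix i p q
    show "{f \<in> ?\<Omega>. (\<forall>x\<in>X. p x \<le> q x) \<and> q i = p i \<and> (\<exists>A\<in>demand X (val_of f) p. i \<in> A)
              \<longrightarrow> (\<exists>A'\<in>demand X (val_of f) q. i \<in> A')} \<in> sets ?M"
    proof (cases "(\<forall>x\<in>X. p x \<le> q x) \<and> q i = p i")
      case True
      have "{f \<in> ?\<Omega>. (\<exists>A\<in>demand X (val_of f) p. i \<in> A) \<longrightarrow> (\<exists>A'\<in>demand X (val_of f) q. i \<in> A')} \<in> sets ?M"
        unfolding demand_alt by (rule sets.sets_Collect_imp; rule dem_meas[OF finP])
      moreover have "{f \<in> ?\<Omega>. (\<forall>x\<in>X. p x \<le> q x) \<and> q i = p i \<and> (\<exists>A\<in>demand X (val_of f) p. i \<in> A)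
              \<longrightarrow> (\<exists>A'\<in>demand X (val_of f) q. i \<in> A')} =
           {f \<in> ?\<Omega>. (\<exists>A\<in>demand X (val_of f) p. i \<in> A) \<longrightarrow> (\<exists>A'\<in>demand X (val_of f) q. i \<in> A')}"
        using True by blast
      ultimately show ?thesis by simp
    next
      case False
      hence "{f \<in> ?\<Omega>. (\<forall>x\<in>X. p x \<le> q x) \<and> q i = p i \<and> (\<exists>A\<in>demand X (val_of f) p. i \<in> A)
              \<longrightarrow> (\<exists>A'\<in>demand X (val_of f) q. i \<in> A')} = ?\<Omega>" by blast
      then show ?thesis by simp
    qed
  qed
  show ?thesis unfolding eq using m1 m2 by blast
qed


lemma three_elems:
  assumes "finite X" "card X \<ge> 3"
  obtains i j k where "i \<in> X" "j \<in> X" "k \<in> X" "i \<noteq> j" "i \<noteq> k" "j \<noteq> k"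
proof -
  obtain T where T: "T \<subseteq> X" "card T = 3" using obtain_subset_with_card_n[OF assms(2)] by blast
  then obtain x y z where "T = {x,y,z}" "x \<noteq> y" "y \<noteq> z" "x \<noteq> z" by (auto simp: card_3_iff)
  thus ?thesis using that T(1) by auto
qed

lemma GS_sub:
  assumes fin: "finite X" and ijk: "i \<in> X" "j \<in> X" "k \<in> X" "i \<noteq> j" "i \<noteq> k" "j \<noteq> k"
    and f: "f \<in> GS_set X"
  shows "f {i,j} = f {i,k} + f {j} - f {k} \<or> f {i,j} = f {j,k} + f {i} - f {k} \<or> f {i,k} = f {j,k} + f {i} - f {j}"
proof -
  let ?v = "val_of f"
  have val: "valuation X ?v" and gs: "gross_substitutes X ?v" using f unfolding GS_set_def by auto
  have vf: "\<And>S. S \<noteq> {} \<Longrightarrow> ?v S = f S" by (simp add: val_of_def)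
  have T1: "\<not> (?v {i,k} + ?v {j} < ?v {i,j} + ?v {k} \<and> ?v {j,k} + ?v {i} < ?v {i,j} + ?v {k})"
    using triple[OF fin val gs ijk] by blast
  have T2: "\<not> (?v {i,j} + ?v {k} < ?v {i,k} + ?v {j} \<and> ?v {k,j} + ?v {i} < ?v {i,k} + ?v {j})"
    using triple[OF fin val gs ijk(1,3,2,5,4) ijk(6)[symmetric]] by blast
  have T3: "\<not> (?v {j,i} + ?v {k} < ?v {j,k} + ?v {i} \<and> ?v {k,i} + ?v {j} < ?v {j,k} + ?v {i})"
    using triple[OF fin val gs ijk(2,3,1) ijk(6) ijk(4)[symmetric] ijk(5)[symmetric]] by blast
  have c: "{k,j} = {j,k}" "{j,i} = {i,j}" "{k,i} = {i,k}" by auto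
  show ?thesis using T1 T2 T3 unfolding c vf[OF insert_not_empty] by linarith
qed

lemma hyp3:
  assumes fin: "finite X" and ijk: "i \<in> X" "j \<in> X" "k \<in> X" "i \<noteq> j" "i \<noteq> k" "j \<noteq> k"
    and s: "s \<in> nonempty_subsets X" and a: "a \<in> nonempty_subsets X" and b: "b \<in> nonempty_subsets X"
    and c: "c \<in> nonempty_subsets X" and ne: "a \<noteq> s" "b \<noteq> s" "c \<noteq> s"
  shows "{f \<in> space (PiM (nonempty_subsets X) (\<lambda>_. lborel)). f s = f a + f b - (f c :: real)}
     \<in> null_sets (PiM (nonempty_subsets X) (\<lambda>_. lborel))"
proof -
  have finI: "finite (nonempty_subsets X)" using fin unfolding nonempty_subsets_def by simp
  have ma: "(\<lambda>f. f a) \<in> borel_measurable (PiM (nonempty_subsets X) (\<lambda>_. lborel))"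
    using measurable_component_singleton[OF a, of "\<lambda>_. lborel"] by simp
  have mb: "(\<lambda>f. f b) \<in> borel_measurable (PiM (nonempty_subsets X) (\<lambda>_. lborel))"
    using measurable_component_singleton[OF b, of "\<lambda>_. lborel"] by simp
  have mc: "(\<lambda>f. f c) \<in> borel_measurable (PiM (nonempty_subsets X) (\<lambda>_. lborel))"
    using measurable_component_singleton[OF c, of "\<lambda>_. lborel"] by simp
  have hm: "(\<lambda>f. f a + f b - f c) \<in> borel_measurable (PiM (nonempty_subsets X) (\<lambda>_. lborel))"
    using ma mb mc by measurable
  have hind: "\<And>f y. (\<lambda>f. f a + f b - f c) (f(s := y)) = (\<lambda>f. f a + f b - f c) (f :: 'a set \<Rightarrow> real)"
    using ne by simp
  show ?thesis using hyper_null[OF finI s hm hind] by simp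
qed

theorem theorem7:
  fixes X :: "'a set"
  assumes "finite X" and "card X \<ge> 3"
  shows "GS_set X \<in> null_sets (PiM (nonempty_subsets X) (\<lambda>_. lborel)) \<and>
         \<not> (\<exists>f\<in>GS_set X. \<exists>e>0. \<forall>g\<in>PiE (nonempty_subsets X) (\<lambda>_. UNIV).
            (\<forall>S\<in>nonempty_subsets X. \<bar>g S - f S\<bar> < e) \<longrightarrow> g \<in> GS_set X)"
proof -
  let ?I = "nonempty_subsets X"
  let ?M = "PiM ?I (\<lambda>_. lborel :: real measure)"
  have fin: "finite X" by (rule assms(1))
  have finI: "finite ?I" using fin unfolding nonempty_subsets_def by simp
  obtain i j k where ijk: "i \<in> X" "j \<in> X" "k \<in> X" "i \<noteq> j" "i \<noteq> k" "j \<noteq> k"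
    using three_elems[OF assms] by blast
  have mem: "{i,j} \<in> ?I" "{i,k} \<in> ?I" "{j,k} \<in> ?I" "{i} \<in> ?I" "{j} \<in> ?I" "{k} \<in> ?I"
    using ijk unfolding nonempty_subsets_def by auto
  have neq: "{i,k} \<noteq> {i,j}" "{j} \<noteq> {i,j}" "{k} \<noteq> {i,j}" "{j,k} \<noteq> {i,j}" "{i} \<noteq> {i,j}"
     "{j,k} \<noteq> {i,k}" "{i} \<noteq> {i,k}" "{j} \<noteq> {i,k}"
    using ijk by (auto simp: doubleton_eq_iff)
  have N1: "{f \<in> space ?M. f {i,j} = f {i,k} + f {j} - f {k}} \<in> null_sets ?M"
    by (rule hyp3[OF fin ijk]) (use mem neq in auto)
  have N2: "{f \<in> space ?M. f {i,j} = f {j,k} + f {i} - f {k}} \<in> null_sets ?M"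
    by (rule hyp3[OF fin ijk]) (use mem neq in auto)
  have N3: "{f \<in> space ?M. f {i,k} = f {j,k} + f {i} - f {j}} \<in> null_sets ?M"
    by (rule hyp3[OF fin ijk]) (use mem neq in auto)
  have N: "{f \<in> space ?M. f {i,j} = f {i,k} + f {j} - f {k}} \<union> {f \<in> space ?M. f {i,j} = f {j,k} + f {i} - f {k}}
      \<union> {f \<in> space ?M. f {i,k} = f {j,k} + f {i} - f {j}} \<in> null_sets ?M"
    using N1 N2 N3 by (intro null_sets.Un) auto
  have sp: "space ?M = PiE ?I (\<lambda>_. UNIV)" by (simp add: space_PiM)
  have sub: "GS_set X \<subseteq> {f \<in> space ?M. f {i,j} = f {i,k} + f {j} - f {k}} \<union> {f \<in> space ?M. f {i,j} = f {j,k} + f {i} - f {k}}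
      \<union> {f \<in> space ?M. f {i,k} = f {j,k} + f {i} - f {j}}"
  proof
    fix f assume f: "f \<in> GS_set X"
    hence "f \<in> space ?M" unfolding sp GS_set_def by auto
    thus "f \<in> {f \<in> space ?M. f {i,j} = f {i,k} + f {j} - f {k}} \<union> {f \<in> space ?M. f {i,j} = f {j,k} + f {i} - f {k}}
      \<union> {f \<in> space ?M. f {i,k} = f {j,k} + f {i} - f {j}}"
      using GS_sub[OF fin ijk f] by blast
  qed
  have Gm: "GS_set X \<in> sets ?M" by (rule GS_meas[OF fin])
  have null: "GS_set X \<in> null_sets ?M" by (rule null_sets_subset[OF N Gm sub])
  have noint: "\<not> (\<exists>f\<in>GS_set X. \<exists>e>0. \<forall>g\<in>PiE ?I (\<lambda>_. UNIV).
            (\<forall>S\<in>?I. \<bar>g S - f S\<bar> < e) \<longrightarrow> g \<in> GS_set X)"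
  proof
    assume "\<exists>f\<in>GS_set X. \<exists>e>0. \<forall>g\<in>PiE ?I (\<lambda>_. UNIV). (\<forall>S\<in>?I. \<bar>g S - f S\<bar> < e) \<longrightarrow> g \<in> GS_set X"
    then obtain f e where e: "0 < e" and
      H: "\<forall>g\<in>PiE ?I (\<lambda>_. UNIV). (\<forall>S\<in>?I. \<bar>g S - f S\<bar> < e) \<longrightarrow> g \<in> GS_set X" by blast
    interpret product_sigma_finite "\<lambda>_. lborel::real measure" by standard
    define B where "B = PiE ?I (\<lambda>S. {f S - e <..< f S + e})"
    have BG: "B \<subseteq> GS_set X"
    proof
      fix g assume g: "g \<in> B"
      hence "g \<in> PiE ?I (\<lambda>_. UNIV)" unfolding B_def by (auto simp: PiE_def Pi_def)
      moreover have "\<forall>S\<in>?I. \<bar>g S - f S\<bar> < e" using g unfolding B_def by (auto simp: PiE_def Pi_def abs_less_iff)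
      ultimately show "g \<in> GS_set X" using H by blast
    qed
    have "emeasure ?M B = (\<Prod>S\<in>?I. emeasure lborel {f S - e <..< f S + e})"
      unfolding B_def by (rule emeasure_PiM[OF finI]) simp
    also have "\<dots> = (\<Prod>S\<in>?I. ennreal (2 * e))"
      using e by (intro prod.cong) auto
    also have "\<dots> = ennreal (2 * e) ^ card ?I" by simp
    finally have Bpos: "emeasure ?M B \<noteq> 0" using e by simp
    have "emeasure ?M B \<le> emeasure ?M (GS_set X)" by (rule emeasure_mono[OF BG Gm])
    also have "\<dots> = 0" using null by auto
    finally show False using Bpos by simp
  qed
  show ?thesis using null noint by blast
qed

end
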